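(* Let $\mathrm{N}\ge 1$ and let the rows and the columns of complex $\mathrm{N}\times\mathrm{N}$ matrices be indexed by finite sets of real labels $\{p\}$ (rows) and $\{p'\}$ (columns), so that a matrix $M$ has entries $M_{p_1p_2}$. Let $E_k(p_1,p_2):=p_1+p_2+m+R_k(p_1,p_2)$, where $m\in\mathbb{R}$ and $R_k$ is a real-valued function of two labels. Define $$H[M,\overline{M}]:=\sum_{p_1,p_2}\overline{M}_{p_1p_2}\,E_k(p_1,p_2)\,M_{p_1p_2}+\sum_{q\ge 2}\frac{a_q\,\mathrm{N}^{-q+1}}{(q!)^2}\,\mathrm{Tr}\,(M^\dagger M)^q$$ with real coefficients $a_q$, and for complex source matrices $L$ the partition function $$Z[L,\overline{L}]:=\int \mathrm{d}M\,\mathrm{d}\overline{M}\;e^{-H[M,\overline{M}]+\overline{L}\cdot M+\overline{M}\cdot L},\qquad A\cdot B:=\sum_{i,j}A_{ij}B_{ij},$$ where $\mathrm{d}M\,\mathrm{d}\overline{M}$ is the Lebesgue measure on $\mathbb{C}^{\mathrm{N}\times\mathrm{N}}$. Then for all row labels $p_1,p_1'$, $$\sum_{p_2}\Bigg(\delta E_k(p_1,p_1',p_2)\,\frac{\partial^2}{\partial L_{p_1p_2}\,\partial\overline{L}_{p_1'p_2}}+\overline{L}_{p_1p_2}\frac{\partial}{\partial\overline{L}_{p_1'p_2}}-L_{p_1'p_2}\frac{\partial}{\partial L_{p_1p_2}}\Bigg)Z[L,\overline{L}]=0,$$ where $\delta E_k(p_1,p_1',p_2):=E_k(p_1',p_2)-E_k(p_1,p_2)=(p_1'-p_1)+R_k(p_1',p_2)-R_k(p_1,p_2)$,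 the sum runs over column labels $p_2$, and $L,\overline{L}$ are treated as independent variables.
   Context: $\overline{M}$ denotes the entrywise complex conjugate of $M$ and $M^\dagger$ its conjugate transpose. The derivatives are defined so that $\partial Z/\partial\overline{L}_{ij}=\int M_{ij}\,e^{\cdots}$ and $\partial Z/\partial L_{ij}=\int \overline{M}_{ij}\,e^{\cdots}$. It is assumed that the integral defining $Z$, and the integrals obtained by differentiating under the integral sign with respect to the sources, converge absolutely (e.g. finitely many nonzero $a_q$ with the highest one positive). *)

theory Defs
  imports "HOL-Analysis.Analysis"
begin

text \<open>Complex matrices with rows indexed by the finite type 'r and columns by the
finite type 'c; the real labels of rows/columns are given by lr / lc.\<close>

primrec mpow :: "'a::semiring_1^'n^'n \<Rightarrow> nat \<Rightarrow> 'a^'n^'n" where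
  "mpow A 0 = mat 1"
| "mpow A (Suc n) = A ** mpow A n"

definition adj :: "complex^'c^'r \<Rightarrow> complex^'r^'c" where
  "adj M = (\<chi> j i. cnj (M$i$j))"

definition mconj :: "complex^'c^'r \<Rightarrow> complex^'c^'r" where
  "mconj M = (\<chi> i j. cnj (M$i$j))"

definition mdot :: "complex^'c^'r \<Rightarrow> complex^'c^'r \<Rightarrow> complex" where
  "mdot A B = (\<Sum>i\<in>UNIV. \<Sum>j\<in>UNIV. A$i$j * B$i$j)"

definition Ek :: "('r \<Rightarrow> real) \<Rightarrow> ('c \<Rightarrow> real) \<Rightarrow> real \<Rightarrow> (real \<Rightarrow> real \<Rightarrow> real) \<Rightarrow> 'r \<Rightarrow> 'c \<Rightarrow> real" where
  "Ek lr lc m R i j = lr i + lc j + m + R (lr i) (lc j)"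

definition pot_term :: "(nat \<Rightarrow> real) \<Rightarrow> complex^'c^'r \<Rightarrow> nat \<Rightarrow> complex" where
  "pot_term a M q = (if 2 \<le> q
     then complex_of_real (a q / (real CARD('r) ^ (q - 1) * (fact q)^2)) * trace (mpow (adj M ** M) q)
     else 0)"

definition Hfun :: "('r \<Rightarrow> real) \<Rightarrow> ('c \<Rightarrow> real) \<Rightarrow> real \<Rightarrow> (real \<Rightarrow> real \<Rightarrow> real) \<Rightarrow> (nat \<Rightarrow> real)
    \<Rightarrow> complex^'c^'r \<Rightarrow> complex" where
  "Hfun lr lc m R a M =
     (\<Sum>i\<in>UNIV. \<Sum>j\<in>UNIV. cnj (M$i$j) * complex_of_real (Ek lr lc m R i j) * M$i$j)
     + (\<Sum>q. pot_term a M q)"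

text \<open>Integrand of Z; K plays the role of the independent variable L-bar.\<close>
definition integrand :: "('r \<Rightarrow> real) \<Rightarrow> ('c \<Rightarrow> real) \<Rightarrow> real \<Rightarrow> (real \<Rightarrow> real \<Rightarrow> real) \<Rightarrow> (nat \<Rightarrow> real)
    \<Rightarrow> complex^'c^'r \<Rightarrow> complex^'c^'r \<Rightarrow> complex^'c^'r \<Rightarrow> complex" where
  "integrand lr lc m R a L K M = exp (- Hfun lr lc m R a M + mdot K M + mdot (mconj M) L)"

definition Zfun :: "('r \<Rightarrow> real) \<Rightarrow> ('c \<Rightarrow> real) \<Rightarrow> real \<Rightarrow> (real \<Rightarrow> real \<Rightarrow> real) \<Rightarrow> (nat \<Rightarrow> real)
    \<Rightarrow> complex^'c^'r \<Rightarrow> complex^'c^'r \<Rightarrow> complex" where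
  "Zfun lr lc m R a L K = integral\<^sup>L lborel (integrand lr lc m R a L K)"

definition mupd :: "'a^'c^'r \<Rightarrow> 'r \<Rightarrow> 'c \<Rightarrow> 'a \<Rightarrow> 'a^'c^'r" where
  "mupd L i j z = (\<chi> a b. if a = i \<and> b = j then z else L$a$b)"

definition dL :: "(complex^'c^'r \<Rightarrow> complex^'c^'r \<Rightarrow> complex) \<Rightarrow> 'r \<Rightarrow> 'c
    \<Rightarrow> complex^'c^'r \<Rightarrow> complex^'c^'r \<Rightarrow> complex" where
  "dL F i j L K = deriv (\<lambda>z. F (mupd L i j z) K) (L$i$j)"

definition dK :: "(complex^'c^'r \<Rightarrow> complex^'c^'r \<Rightarrow> complex) \<Rightarrow> 'r \<Rightarrow> 'c
    \<Rightarrow> complex^'c^'r \<Rightarrow> complex^'c^'r \<Rightarrow> complex" where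
  "dK F i j L K = deriv (\<lambda>z. F L (mupd K i j z)) (K$i$j)"

end

theory Submission
  imports Defs
begin


lemma basis_iso:
  assumes "DIM('a::euclidean_space) = DIM('b::euclidean_space)"
  shows "\<exists>(\<phi>::'a \<Rightarrow> 'b) \<psi>. (\<forall>x. \<psi> (\<phi> x) = x) \<and> (\<forall>y. \<phi> (\<psi> y) = y) \<and> linear \<phi> \<and> linear \<psi>
     \<and> (\<forall>x y. \<phi> x \<bullet> \<phi> y = x \<bullet> y) \<and> distr lborel borel \<phi> = lborel"
proof -
  obtain g where g: "bij_betw g (Basis::'a set) (Basis::'b set)"
    using finite_same_card_bij[of "Basis::'a set" "Basis::'b set"] assms by auto
  have gB: "b \<in> Basis \<Longrightarrow> g b \<in> Basis" for b using g bij_betwE by blast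
  have ginj: "b \<in> Basis \<Longrightarrow> b' \<in> Basis \<Longrightarrow> g b = g b' \<longleftrightarrow> b = b'" for b b'
    using g by (auto simp: bij_betw_def inj_on_def)
  have gsurj: "c \<in> Basis \<Longrightarrow> \<exists>b\<in>Basis. c = g b" for c
    using g by (auto simp: bij_betw_def)
  define \<phi> where "\<phi> x = (\<Sum>b\<in>Basis. (x \<bullet> b) *\<^sub>R g b)" for x :: 'a
  define \<psi> where "\<psi> y = (\<Sum>b\<in>Basis. (y \<bullet> g b) *\<^sub>R b)" for y :: 'b
  have phig: "\<phi> x \<bullet> g b = x \<bullet> b" if b: "b \<in> Basis" for x b
  proof -
    have "\<phi> x \<bullet> g b = (\<Sum>b'\<in>Basis. (x \<bullet> b') * (g b' \<bullet> g b))"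
      by (simp add: \<phi>_def inner_sum_left)
    also have "\<dots> = (\<Sum>b'\<in>Basis. if b' = b then x \<bullet> b' else 0)"
      by (intro sum.cong refl) (auto simp: inner_Basis gB b ginj)
    finally show ?thesis using b by simp
  qed
  have psib: "\<psi> y \<bullet> b = y \<bullet> g b" if b: "b \<in> Basis" for y b
    using b by (simp add: \<psi>_def inner_sum_left inner_Basis if_distrib cong: if_cong)
  have 1: "\<psi> (\<phi> x) = x" for x
    by (simp add: \<psi>_def phig euclidean_representation cong: sum.cong)
  have 2: "\<phi> (\<psi> y) = y" for y
  proof -
    have "\<phi> (\<psi> y) = (\<Sum>b\<in>Basis. (y \<bullet> g b) *\<^sub>R g b)"
      by (simp add: \<phi>_def psib cong: sum.cong)
    also have "\<dots> = (\<Sum>c\<in>Basis. (y \<bullet> c) *\<^sub>R c)"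
      using sum.reindex_bij_betw[OF g, of "\<lambda>c. (y \<bullet> c) *\<^sub>R c"] by simp
    finally show ?thesis by (simp add: euclidean_representation)
  qed
  have l1: "linear \<phi>"
    unfolding \<phi>_def by (intro linearI) (simp_all add: inner_add_left scaleR_add_left sum.distrib scaleR_sum_right)
  have l2: "linear \<psi>"
    unfolding \<psi>_def by (intro linearI) (simp_all add: inner_add_left scaleR_add_left sum.distrib scaleR_sum_right)
  have inn: "\<phi> x \<bullet> \<phi> y = x \<bullet> y" for x y
  proof -
    have "\<phi> x \<bullet> \<phi> y = (\<Sum>c\<in>Basis. (\<phi> x \<bullet> c) * (\<phi> y \<bullet> c))"
      by (rule euclidean_inner)
    also have "\<dots> = (\<Sum>b\<in>Basis. (\<phi> x \<bullet> g b) * (\<phi> y \<bullet> g b))"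
      using sum.reindex_bij_betw[OF g, of "\<lambda>c. (\<phi> x \<bullet> c) * (\<phi> y \<bullet> c)"] by simp
    also have "\<dots> = (\<Sum>b\<in>Basis. (x \<bullet> b) * (y \<bullet> b))"
      by (simp add: phig)
    finally show ?thesis using euclidean_inner[of x y] by simp
  qed
  have pm: "\<phi> \<in> borel_measurable borel"
    using l1 by (intro borel_measurable_continuous_onI linear_continuous_on) (simp add: linear_conv_bounded_linear)
  have D: "distr lborel borel \<phi> = lborel"
  proof (rule lborel_eqI[symmetric])
    fix l u :: 'b assume lu: "\<And>b. b \<in> Basis \<Longrightarrow> l \<bullet> b \<le> u \<bullet> b"
    have pre: "\<phi> -` box l u = box (\<psi> l) (\<psi> u)"
    proof -
      have "x \<in> \<phi> -` box l u \<longleftrightarrow> x \<in> box (\<psi> l) (\<psi> u)" for x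
      proof -
        have "x \<in> \<phi> -` box l u \<longleftrightarrow> (\<forall>c\<in>Basis. l \<bullet> c < \<phi> x \<bullet> c \<and> \<phi> x \<bullet> c < u \<bullet> c)"
          by (simp add: mem_box)
        also have "\<dots> \<longleftrightarrow> (\<forall>b\<in>Basis. l \<bullet> g b < \<phi> x \<bullet> g b \<and> \<phi> x \<bullet> g b < u \<bullet> g b)"
          using gB gsurj by (metis (no_types, lifting))
        also have "\<dots> \<longleftrightarrow> x \<in> box (\<psi> l) (\<psi> u)"
          by (simp add: mem_box phig psib)
        finally show ?thesis .
      qed
      then show ?thesis by blast
    qed
    have lu': "\<And>b. b \<in> Basis \<Longrightarrow> \<psi> l \<bullet> b \<le> \<psi> u \<bullet> b"
      by (simp add: psib lu gB)
    have "emeasure (distr lborel borel \<phi>) (box l u) = emeasure lborel (box (\<psi> l) (\<psi> u))"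
      using pm by (simp add: emeasure_distr pre)
    also have "\<dots> = ennreal (\<Prod>b\<in>Basis. (\<psi> u - \<psi> l) \<bullet> b)"
      using lu' by (simp add: emeasure_lborel_box_eq)
    also have "(\<Prod>b\<in>Basis. (\<psi> u - \<psi> l) \<bullet> b) = (\<Prod>b\<in>Basis. (u - l) \<bullet> g b)"
      by (intro prod.cong refl) (simp add: inner_diff_left psib)
    also have "\<dots> = (\<Prod>c\<in>Basis. (u - l) \<bullet> c)"
      using prod.reindex_bij_betw[OF g, of "\<lambda>c. (u - l) \<bullet> c"] by simp
    finally show "emeasure (distr lborel borel \<phi>) (box l u) = ennreal (prod ((\<bullet>) (u - l)) Basis)" .
  qed simp
  show ?thesis using 1 2 l1 l2 inn D by blast
qed


lemma emeasure_lborel_lebesgue: "A \<in> sets borel \<Longrightarrow> emeasure lborel A = emeasure lebesgue A"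
  by (simp add: emeasure_completion main_part)

lemma orth_lborel_cart:
  fixes h :: "real^'m::{finite,wellorder} \<Rightarrow> real^'m::_"
  assumes h: "orthogonal_transformation h"
  shows "distr lborel borel h = lborel"
proof -
  have lin: "linear h" using h orthogonal_transformation_linear by blast
  have hm: "h \<in> borel_measurable borel"
    using lin by (intro borel_measurable_continuous_onI linear_continuous_on) (simp add: linear_conv_bounded_linear)
  have bij: "bij h" using h orthogonal_transformation_bij by blast
  have hi: "orthogonal_transformation (inv h)" using h orthogonal_transformation_inv by blast
  show ?thesis
  proof (rule lborel_eqI[symmetric])
    fix l u :: "real^'m::_" assume lu: "\<And>b. b \<in> Basis \<Longrightarrow> l \<bullet> b \<le> u \<bullet> b"
    have pre: "h -` box l u = inv h ` box l u"
      using bij by (simp add: bij_vimage_eq_inv_image)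
    have B: "h -` box l u \<in> sets borel" using hm by (simp add: measurable_sets_borel)
    have "emeasure (distr lborel borel h) (box l u) = emeasure lborel (h -` box l u)"
      using hm by (simp add: emeasure_distr)
    also have "\<dots> = emeasure lebesgue (h -` box l u)"
      using B by (rule emeasure_lborel_lebesgue)
    also have "\<dots> = measure lebesgue (inv h ` box l u)"
      unfolding pre by (intro emeasure_eq_measure2 measurable_orthogonal_image hi) auto
    also have "\<dots> = measure lebesgue (box l u)"
      using measure_orthogonal_image[OF hi, of "box l u"] by simp
    also have "\<dots> = measure lborel (box l u)"
      by simp
    also have "\<dots> = emeasure lborel (box l u)"
      by (simp add: emeasure_eq_measure2)
    finally show "emeasure (distr lborel borel h) (box l u) = ennreal (prod ((\<bullet>) (u - l)) Basis)"
      using lu by (simp add: emeasure_lborel_box_eq)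
  qed simp
qed


lemma orth_lborel:
  fixes f :: "'a::euclidean_space \<Rightarrow> 'a"
  assumes "DIM('a) = CARD('m::{finite,wellorder})" and f: "orthogonal_transformation f"
  shows "distr lborel borel f = lborel"
proof -
  have "DIM('a) = DIM(real^'m::_)" using assms by simp
  from basis_iso[OF this] obtain \<phi> :: "'a \<Rightarrow> real^'m::_" and \<psi> where
    1: "\<And>x. \<psi> (\<phi> x) = x" and 2: "\<And>y. \<phi> (\<psi> y) = y" and l1: "linear \<phi>" and l2: "linear \<psi>"
    and inn: "\<And>x y. \<phi> x \<bullet> \<phi> y = x \<bullet> y" and D: "distr lborel borel \<phi> = lborel" by blast
  define h where "h = \<phi> \<circ> f \<circ> \<psi>"
  have lf: "linear f" using f orthogonal_transformation_linear by blast
  have "orthogonal_transformation h"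
    unfolding orthogonal_transformation_def h_def
  proof (intro conjI allI)
    show "linear (\<phi> \<circ> f \<circ> \<psi>)" using l1 l2 lf by (intro linear_compose)
    fix v w
    have "(\<phi> \<circ> f \<circ> \<psi>) v \<bullet> (\<phi> \<circ> f \<circ> \<psi>) w = \<psi> v \<bullet> \<psi> w"
      using f by (simp add: inn orthogonal_transformation_def)
    also have "\<dots> = v \<bullet> w" using inn[of "\<psi> v" "\<psi> w"] by (simp add: 2)
    finally show "(\<phi> \<circ> f \<circ> \<psi>) v \<bullet> (\<phi> \<circ> f \<circ> \<psi>) w = v \<bullet> w" .
  qed
  then have Dh: "distr lborel borel h = lborel" by (rule orth_lborel_cart)
  have meas: "g \<in> borel_measurable borel" if "linear g" for g :: "'x::euclidean_space \<Rightarrow> 'y::euclidean_space"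
    using that by (intro borel_measurable_continuous_onI linear_continuous_on) (simp add: linear_conv_bounded_linear)
  have hm: "h \<in> borel_measurable borel" unfolding h_def using l1 l2 lf by (intro meas linear_compose)
  have fm: "f \<in> borel_measurable borel" using lf by (rule meas)
  have pm: "\<phi> \<in> borel_measurable borel" using l1 by (rule meas)
  have qm: "\<psi> \<in> borel_measurable borel" using l2 by (rule meas)
  have feq: "f = \<psi> \<circ> h \<circ> \<phi>" by (simp add: h_def fun_eq_iff 1)
  have "distr lborel borel f = distr (distr (distr lborel borel \<phi>) borel h) borel \<psi>"
    unfolding feq using pm hm qm by (simp add: distr_distr comp_assoc)
  also have "\<dots> = distr lborel borel \<psi>" by (simp add: D Dh)
  also have "\<dots> = distr (distr lborel borel \<phi>) borel \<psi>" by (simp add: D)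
  also have "\<dots> = distr lborel borel (\<psi> \<circ> \<phi>)" using pm qm by (simp add: distr_distr)
  also have "\<dots> = distr lborel borel (\<lambda>x. x)" by (simp add: o_def 1)
  also have "\<dots> = lborel" by (simp add: distr_id2)
  finally show ?thesis .
qed


lemma exp_abs_le: "exp \<bar>a::real\<bar> \<le> exp a + exp (-a)"
  by (cases "a \<ge> 0") (auto simp: add_increasing2 add_increasing)

lemma exp4:
  fixes w :: complex
  shows "exp (cmod w) \<le> cmod (exp ((1+\<i>)*w)) + cmod (exp ((1-\<i>)*w)) + cmod (exp ((-1+\<i>)*w)) + cmod (exp ((-1-\<i>)*w))"
proof -
  define a b where "a = Re w" and "b = Im w"
  have "exp (cmod w) \<le> exp (\<bar>a\<bar> + \<bar>b\<bar>)" using cmod_le[of w] by (simp add: a_def b_def)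
  also have "\<dots> = exp \<bar>a\<bar> * exp \<bar>b\<bar>" by (simp add: exp_add)
  also have "\<dots> \<le> (exp a + exp (-a)) * (exp b + exp (-b))"
    by (intro mult_mono exp_abs_le) (auto intro: add_nonneg_nonneg)
  also have "\<dots> = exp (a - b) + exp (a + b) + exp (-a - b) + exp (-a + b)"
    by (simp add: algebra_simps flip: exp_add)
  also have "\<dots> = cmod (exp ((1+\<i>)*w)) + cmod (exp ((1-\<i>)*w)) + cmod (exp ((-1+\<i>)*w)) + cmod (exp ((-1-\<i>)*w))"
    by (simp add: norm_exp_eq_Re a_def b_def algebra_simps)
  finally show ?thesis .
qed

lemma exp_quot_bound:
  fixes h w :: complex
  assumes "h \<noteq> 0" "cmod h \<le> 1"
  shows "cmod ((exp (h * w) - 1) / h) \<le> cmod w * exp (cmod w)"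
proof -
  have "cmod (exp (h * w) - 1) \<le> exp (cmod (h*w)) * cmod (h*w)"
    using Taylor_exp_field[of "h*w" 0] by simp
  also have "\<dots> \<le> exp (cmod w) * (cmod h * cmod w)"
    using assms by (intro mult_mono) (auto simp: norm_mult mult_left_le_one_le)
  finally show ?thesis using assms by (simp add: norm_divide divide_le_eq mult_ac)
qed

lemma deriv_integral:
  fixes g \<phi> :: "'x::euclidean_space \<Rightarrow> complex"
  assumes int1: "\<And>c. integrable lborel (\<lambda>x. g x * exp (c * \<phi> x))"
    and int2: "\<And>c. integrable lborel (\<lambda>x. \<phi> x * (g x * exp (c * \<phi> x)))"
  shows "((\<lambda>z. \<integral>x. g x * exp (z * \<phi> x) \<partial>lborel) has_field_derivative
          (\<integral>x. \<phi> x * (g x * exp (z0 * \<phi> x)) \<partial>lborel)) (at z0)"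
proof -
  define F where "F z = (\<integral>x. g x * exp (z * \<phi> x) \<partial>lborel)" for z
  define D where "D = (\<integral>x. \<phi> x * (g x * exp (z0 * \<phi> x)) \<partial>lborel)"
  define w where "w x = cmod (\<phi> x * (g x * exp ((z0 + (1+\<i>)) * \<phi> x))) + cmod (\<phi> x * (g x * exp ((z0 + (1-\<i>)) * \<phi> x)))
     + cmod (\<phi> x * (g x * exp ((z0 + (-1+\<i>)) * \<phi> x))) + cmod (\<phi> x * (g x * exp ((z0 + (-1-\<i>)) * \<phi> x)))" for x
  have wint: "integrable lborel w"
    unfolding w_def by (intro Bochner_Integration.integrable_add integrable_norm int2)
  have quot: "(F y - F z0) / (y - z0) = (\<integral>x. (g x * exp (y * \<phi> x) - g x * exp (z0 * \<phi> x)) / (y - z0) \<partial>lborel)" for y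
    unfolding F_def by (simp add: integral_divide_zero integral_diff int1)
  have "((\<lambda>y. (F y - F z0) / (y - z0)) \<longlongrightarrow> D) (at z0)"
  proof (subst tendsto_at_iff_sequentially, intro allI impI)
    fix X :: "nat \<Rightarrow> complex" assume Xne: "\<forall>i. X i \<in> UNIV - {z0}" and Xl: "X \<longlonglongrightarrow> z0"
    define h where "h i = X i - z0" for i
    have hne: "h i \<noteq> 0" for i using Xne by (auto simp: h_def)
    have hl: "h \<longlonglongrightarrow> 0" unfolding h_def using Xl by (simp add: LIM_zero)
    then obtain N where N: "\<And>n. n \<ge> N \<Longrightarrow> cmod (h n) \<le> 1"
      by (metis (full_types) LIMSEQ_iff diff_zero less_imp_le zero_less_one)
    define s where "s i x = (g x * exp (X (i + N) * \<phi> x) - g x * exp (z0 * \<phi> x)) / (X (i + N) - z0)" for i x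
    have s_eq: "s i x = g x * exp (z0 * \<phi> x) * ((exp (h (i+N) * \<phi> x) - 1) / h (i+N))" for i x
      by (simp add: s_def h_def field_simps flip: exp_add)
    have "(\<lambda>i. \<integral>x. s i x \<partial>lborel) \<longlonglongrightarrow> (\<integral>x. \<phi> x * (g x * exp (z0 * \<phi> x)) \<partial>lborel)"
    proof (rule integral_dominated_convergence[where w=w])
      show "(\<lambda>x. \<phi> x * (g x * exp (z0 * \<phi> x))) \<in> borel_measurable lborel" using int2[of z0] by (rule borel_measurable_integrable)
      show "s i \<in> borel_measurable lborel" for i
        unfolding s_def using int1 by (intro borel_measurable_divide borel_measurable_diff borel_measurable_integrable) auto
      show "integrable lborel w" by (rule wint)
      show "AE x in lborel. (\<lambda>i. s i x) \<longlonglongrightarrow> \<phi> x * (g x * exp (z0 * \<phi> x))"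
      proof (intro AE_I2)
        fix x
        have d: "((\<lambda>t. exp (t * \<phi> x)) has_field_derivative \<phi> x) (at 0)"
          by (auto intro!: derivative_eq_intros)
        then have "((\<lambda>t. (exp (t * \<phi> x) - exp (0 * \<phi> x)) / (t - 0)) \<longlongrightarrow> \<phi> x) (at 0)"
          by (simp add: has_field_derivative_iff)
        then have q: "((\<lambda>t. (exp (t * \<phi> x) - 1) / t) \<longlongrightarrow> \<phi> x) (at 0)" by simp
        have hl': "filterlim (\<lambda>i. h (i + N)) (at 0) sequentially"
          using hne by (intro filterlim_atI) (auto intro: LIMSEQ_ignore_initial_segment[OF hl])
        have "(\<lambda>i. (exp (h (i+N) * \<phi> x) - 1) / h (i+N)) \<longlonglongrightarrow> \<phi> x"
          using filterlim_compose[OF q hl'] by (simp add: o_def)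
        then have "(\<lambda>i. g x * exp (z0 * \<phi> x) * ((exp (h (i+N) * \<phi> x) - 1) / h (i+N))) \<longlonglongrightarrow> g x * exp (z0 * \<phi> x) * \<phi> x"
          by (intro tendsto_mult tendsto_const)
        then show "(\<lambda>i. s i x) \<longlonglongrightarrow> \<phi> x * (g x * exp (z0 * \<phi> x))"
          by (simp add: s_eq mult_ac)
      qed
      show "AE x in lborel. norm (s i x) \<le> w x" for i
      proof (intro AE_I2)
        fix x
        have "norm (s i x) = cmod (g x * exp (z0 * \<phi> x)) * cmod ((exp (h (i+N) * \<phi> x) - 1) / h (i+N))"
          unfolding s_eq norm_mult by simp
        also have "\<dots> \<le> cmod (g x * exp (z0 * \<phi> x)) * (cmod (\<phi> x) * exp (cmod (\<phi> x)))"
          by (intro mult_left_mono exp_quot_bound hne N) auto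
        also have "\<dots> \<le> cmod (g x * exp (z0 * \<phi> x)) * (cmod (\<phi> x) * (cmod (exp ((1+\<i>)*\<phi> x)) + cmod (exp ((1-\<i>)*\<phi> x)) + cmod (exp ((-1+\<i>)*\<phi> x)) + cmod (exp ((-1-\<i>)*\<phi> x))))"
          by (intro mult_left_mono exp4) auto
        also have "\<dots> = w x"
          by (simp add: w_def norm_mult distrib_left distrib_right exp_add mult_ac)
        finally show "norm (s i x) \<le> w x" .
      qed
    qed
    moreover have "(\<lambda>i. \<integral>x. s i x \<partial>lborel) = (\<lambda>i. ((\<lambda>y. (F y - F z0) / (y - z0)) \<circ> X) (i + N))"
      by (simp add: quot s_def fun_eq_iff)
    ultimately have "(\<lambda>i. ((\<lambda>y. (F y - F z0) / (y - z0)) \<circ> X) (i + N)) \<longlonglongrightarrow> D"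
      by (simp add: D_def)
    then show "((\<lambda>y. (F y - F z0) / (y - z0)) \<circ> X) \<longlonglongrightarrow> D"
      by (rule LIMSEQ_offset)
  qed
  then show ?thesis
    unfolding F_def[symmetric] D_def[symmetric] by (simp add: has_field_derivative_iff)
qed


lemma ward_core:
  fixes T :: "real \<Rightarrow> 'x::euclidean_space \<Rightarrow> 'x" and Ig J :: "'x \<Rightarrow> complex"
  assumes mp: "\<And>s. distr lborel borel (T s) = lborel"
    and Tc: "continuous_on UNIV (\<lambda>p. T (fst p) (snd p))"
    and Iint: "integrable lborel Ig" and Jint: "integrable lborel J"
    and der: "\<And>M s. ((\<lambda>s. Ig (T s M)) has_vector_derivative J (T s M)) (at s)"
    and cont: "\<And>M. continuous_on UNIV (\<lambda>s. J (T s M))"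
    and T0: "\<And>M. T 0 M = M"
  shows "integral\<^sup>L lborel J = 0"
proof -
  have Tm: "T s \<in> borel_measurable borel" for s
  proof -
    have "continuous_on UNIV (\<lambda>M. T s M)"
      using continuous_on_compose2[OF Tc, where f="\<lambda>M. (s, M)" and s=UNIV] continuous_on_Pair[OF continuous_on_const continuous_on_id] by auto
    then show ?thesis by (rule borel_measurable_continuous_onI)
  qed
  have Tm': "T s \<in> lborel \<rightarrow>\<^sub>M borel" for s using Tm[of s] by simp
  have Jm: "J \<in> borel_measurable borel" using borel_measurable_integrable[OF Jint] by simp
  have Im: "Ig \<in> borel_measurable borel" using borel_measurable_integrable[OF Iint] by simp
  have ieq: "(\<integral>x. f (T s x) \<partial>lborel) = integral\<^sup>L lborel f" if "f \<in> borel_measurable borel" for f :: "'x \<Rightarrow> complex" and s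
    using integral_distr[OF Tm' that, of s] by (simp add: mp)
  have iint: "integrable lborel (\<lambda>x. f (T s x))" if "f \<in> borel_measurable borel" "integrable lborel f" for f :: "'x \<Rightarrow> complex" and s
    using integrable_distr_eq[OF Tm' that(1), of s] that(2) by (simp add: mp)
  have ieqr: "(\<integral>x. f (T s x) \<partial>lborel) = integral\<^sup>L lborel f" if "f \<in> borel_measurable borel" for f :: "'x \<Rightarrow> real" and s
    using integral_distr[OF Tm' that, of s] by (simp add: mp)
  define f where "f s M = indicator {0..1::real} s *\<^sub>R J (T s M)" for s M
  have FTC: "(\<integral>s. f s M \<partial>lborel) = Ig (T 1 M) - Ig M" for M
  proof -
    have "interval_lebesgue_integral lborel (ereal 0) (ereal 1) (\<lambda>s. J (T s M)) = Ig (T 1 M) - Ig (T 0 M)"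
    proof (rule interval_integral_FTC_finite[where F="\<lambda>s. Ig (T s M)" and f="\<lambda>s. J (T s M)"])
      show "continuous_on {min 0 1..max 0 1} (\<lambda>s. J (T s M))"
        using cont[of M] by (rule continuous_on_subset) auto
      show "((\<lambda>s. Ig (T s M)) has_vector_derivative J (T x M)) (at x within {min 0 1..max 0 1})" for x
        using der[of M x] by (rule has_vector_derivative_at_within)
    qed
    then show ?thesis
      by (simp add: f_def interval_integral_Icc set_lebesgue_integral_def T0)
  qed
  have psf: "pair_sigma_finite (lborel::real measure) (lborel::'x measure)"
    by (simp add: pair_sigma_finite_def sigma_finite_lborel)
  have fm: "(\<lambda>p. f (fst p) (snd p)) \<in> borel_measurable (lborel \<Otimes>\<^sub>M lborel)"
  proof -
    have "(\<lambda>p. T (fst p) (snd p)) \<in> borel_measurable borel"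
      using Tc by (rule borel_measurable_continuous_onI)
    then have "(\<lambda>p. J (T (fst p) (snd p))) \<in> borel_measurable borel"
      using Jm by (rule measurable_compose)
    moreover have ind: "(\<lambda>p::real\<times>'x. indicator {0..1::real} (fst p) :: real) \<in> borel_measurable borel"
    proof -
      have "(\<lambda>p::real\<times>'x. indicator {0..1::real} (fst p) :: real) = indicator ({0..1} \<times> UNIV)"
        by (auto simp: indicator_def fun_eq_iff)
      moreover have "{0..1::real} \<times> (UNIV::'x set) \<in> sets borel" by (intro borel_closed closed_Times) auto
      ultimately show ?thesis by simp
    qed
    ultimately have "(\<lambda>p. indicator {0..1::real} (fst p) *\<^sub>R J (T (fst p) (snd p))) \<in> borel_measurable (borel :: (real \<times> 'x) measure)"
      by (intro borel_measurable_scaleR)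
    then show ?thesis by (simp add: lborel_prod f_def)
  qed
  have inner_norm: "(\<integral>M. norm (f s M) \<partial>lborel) = indicator {0..1} s * (\<integral>M. norm (J M) \<partial>lborel)" for s
  proof -
    have "(\<integral>M. norm (f s M) \<partial>lborel) = (\<integral>M. indicator {0..1} s * norm (J (T s M)) \<partial>lborel)"
      by (simp add: f_def)
    also have "\<dots> = indicator {0..1} s * (\<integral>M. norm (J (T s M)) \<partial>lborel)" by simp
    also have "(\<integral>M. norm (J (T s M)) \<partial>lborel) = (\<integral>M. norm (J M) \<partial>lborel)"
      using Jm by (intro ieqr) measurable
    finally show ?thesis .
  qed
  have prod_int: "integrable (lborel \<Otimes>\<^sub>M lborel) (\<lambda>p. f (fst p) (snd p))"
  proof (rule pair_sigma_finite.Fubini_integrable[OF psf fm])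
    show "integrable lborel (\<lambda>s. \<integral>M. norm (f (fst (s, M)) (snd (s, M))) \<partial>lborel)"
      by (simp add: inner_norm)
    show "AE s in lborel. integrable lborel (\<lambda>M. f (fst (s, M)) (snd (s, M)))"
      by (intro AE_I2) (simp add: f_def iint Jm Jint)
  qed
  have "(\<integral>M. (\<integral>s. f s M \<partial>lborel) \<partial>lborel) = (\<integral>s. (\<integral>M. f s M \<partial>lborel) \<partial>lborel)"
    using pair_sigma_finite.Fubini_integral[OF psf, of f] prod_int unfolding case_prod_beta' by simp
  moreover have "(\<integral>M. (\<integral>s. f s M \<partial>lborel) \<partial>lborel) = 0"
  proof -
    have "(\<integral>M. (\<integral>s. f s M \<partial>lborel) \<partial>lborel) = (\<integral>M. Ig (T 1 M) - Ig M \<partial>lborel)"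
      by (simp add: FTC)
    also have "\<dots> = (\<integral>M. Ig (T 1 M) \<partial>lborel) - integral\<^sup>L lborel Ig"
      by (intro Bochner_Integration.integral_diff iint Im Iint)
    also have "\<dots> = 0" by (simp add: ieq Im)
    finally show ?thesis .
  qed
  moreover have "(\<integral>s. (\<integral>M. f s M \<partial>lborel) \<partial>lborel) = integral\<^sup>L lborel J"
  proof -
    have "(\<integral>s. (\<integral>M. f s M \<partial>lborel) \<partial>lborel) = (\<integral>s. indicator {0..1::real} s *\<^sub>R integral\<^sup>L lborel J \<partial>lborel)"
      by (intro Bochner_Integration.integral_cong refl) (simp add: f_def ieq Jm)
    also have "\<dots> = integral\<^sup>L lborel J" by simp
    finally show ?thesis .
  qed
  ultimately show ?thesis by simp
qed


type_synonym ('c,'r) mat = "complex^'c^'r"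

definition kin :: "('r \<Rightarrow> 'c \<Rightarrow> real) \<Rightarrow> complex^'c^'r \<Rightarrow> complex" where
  "kin E N = (\<Sum>i\<in>UNIV. \<Sum>j\<in>UNIV. cnj (N$i$j) * complex_of_real (E i j) * N$i$j)"

definition pot :: "(nat \<Rightarrow> real) \<Rightarrow> complex^'c^'r \<Rightarrow> complex" where
  "pot a N = (\<Sum>q. pot_term a N q)"

definition S0 :: "('r \<Rightarrow> 'c \<Rightarrow> real) \<Rightarrow> complex^'c^'r \<Rightarrow> complex^'c^'r \<Rightarrow> complex^'c^'r \<Rightarrow> complex" where
  "S0 E L K N = - kin E N + mdot K N + mdot (mconj N) L"

definition dd :: "('r \<Rightarrow> 'c \<Rightarrow> real) \<Rightarrow> complex^'c^'r \<Rightarrow> complex^'c^'r \<Rightarrow> complex^'c^'r \<Rightarrow> complex^'c^'r \<Rightarrow> 'r \<Rightarrow> 'c \<Rightarrow> complex" where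
  "dd E L K N H i j = - (cnj (H$i$j) * complex_of_real (E i j) * N$i$j + cnj (N$i$j) * complex_of_real (E i j) * H$i$j)
      + K$i$j * H$i$j + cnj (H$i$j) * L$i$j"

definition DS0 :: "('r \<Rightarrow> 'c \<Rightarrow> real) \<Rightarrow> complex^'c^'r \<Rightarrow> complex^'c^'r \<Rightarrow> complex^'c^'r \<Rightarrow> complex^'c^'r \<Rightarrow> complex" where
  "DS0 E L K N H = (\<Sum>i\<in>UNIV. \<Sum>j\<in>UNIV. dd E L K N H i j)"

lemma has_derivative_nth2[derivative_intros]:
  "(f has_derivative f') F \<Longrightarrow> ((\<lambda>x. (f x :: 'a::real_normed_vector^'c^'r) $ i $ j) has_derivative (\<lambda>h. f' h $ i $ j)) F"
proof -
  assume "(f has_derivative f') F"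
  moreover have "bounded_linear (\<lambda>x::'a^'c^'r. x $ i $ j)"
    using bounded_linear_compose[OF bounded_linear_vec_nth bounded_linear_vec_nth] .
  ultimately show ?thesis using bounded_linear.has_derivative by blast
qed

lemma S0_deriv: "(S0 E L K has_derivative DS0 E L K N) (at N)"
proof -
  have "(S0 E L K has_derivative (\<lambda>H. - (\<Sum>i\<in>UNIV. \<Sum>j\<in>UNIV. cnj (H$i$j) * complex_of_real (E i j) * N$i$j + cnj (N$i$j) * complex_of_real (E i j) * H$i$j)
       + (\<Sum>i\<in>UNIV. \<Sum>j\<in>UNIV. K$i$j * H$i$j) + (\<Sum>i\<in>UNIV. \<Sum>j\<in>UNIV. cnj (H$i$j) * L$i$j))) (at N)"
    unfolding S0_def kin_def mdot_def mconj_def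
    by (auto intro!: derivative_eq_intros simp: algebra_simps)
  moreover have "DS0 E L K N = (\<lambda>H. - (\<Sum>i\<in>UNIV. \<Sum>j\<in>UNIV. cnj (H$i$j) * complex_of_real (E i j) * N$i$j + cnj (N$i$j) * complex_of_real (E i j) * H$i$j)
       + (\<Sum>i\<in>UNIV. \<Sum>j\<in>UNIV. K$i$j * H$i$j) + (\<Sum>i\<in>UNIV. \<Sum>j\<in>UNIV. cnj (H$i$j) * L$i$j))"
    unfolding DS0_def dd_def fun_eq_iff
    by (simp only: sum.distrib sum_negf) simp
  ultimately show ?thesis by simp
qed


definition gen :: "('r \<Rightarrow> complex) \<Rightarrow> ('r \<Rightarrow> 'r) \<Rightarrow> complex^'c^'r \<Rightarrow> complex^'c^'r" where
  "gen v \<sigma> N = (\<chi> i j. v i * N$(\<sigma> i)$j)"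

definition prj :: "('r \<Rightarrow> real) \<Rightarrow> complex^'c^'r \<Rightarrow> complex^'c^'r" where
  "prj w N = (\<chi> i j. complex_of_real (w i) * N$i$j)"

definition Tf :: "('r \<Rightarrow> complex) \<Rightarrow> ('r \<Rightarrow> 'r) \<Rightarrow> ('r \<Rightarrow> real) \<Rightarrow> real \<Rightarrow> complex^'c^'r \<Rightarrow> complex^'c^'r" where
  "Tf v \<sigma> w s N = N + (cos s - 1) *\<^sub>R prj w N + sin s *\<^sub>R gen v \<sigma> N"

lemma gen_nth[simp]: "gen v \<sigma> N $ i $ j = v i * N$(\<sigma> i)$j" by (simp add: gen_def)
lemma prj_nth[simp]: "prj w N $ i $ j = complex_of_real (w i) * N$i$j" by (simp add: prj_def)

lemma linear_gen: "linear (gen v \<sigma>)"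
  by (intro linearI) (simp_all add: vec_eq_iff algebra_simps scaleR_conv_of_real[where 'a=complex])

lemma linear_prj: "linear (prj w)"
  by (intro linearI) (simp_all add: vec_eq_iff algebra_simps scaleR_conv_of_real[where 'a=complex])

lemma linear_Tf: "linear (Tf v \<sigma> w s)"
  unfolding Tf_def
  by (intro linear_compose_add linear_id[unfolded id_def] linear_compose_scale_right linear_gen linear_prj)

lemma Tf_nth: "Tf v \<sigma> w s N $ i $ j = N$i$j + complex_of_real (cos s - 1) * (complex_of_real (w i) * N$i$j) + complex_of_real (sin s) * (v i * N$(\<sigma> i)$j)"
  by (simp add: Tf_def scaleR_conv_of_real[where 'a=complex])

lemma Tf0: "Tf v \<sigma> w 0 N = N" by (simp add: Tf_def)

lemma cont_linear: "linear f \<Longrightarrow> continuous_on S (f :: 'a::euclidean_space \<Rightarrow> 'b::euclidean_space)"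
  by (intro linear_continuous_on) (simp add: linear_conv_bounded_linear)

lemma Tf_cont:
  fixes v :: "'r::finite \<Rightarrow> complex"
  shows "continuous_on UNIV (\<lambda>p::real \<times> (complex^'c::finite^'r). Tf v \<sigma> w (fst p) (snd p))"
proof -
  have "continuous_on UNIV (\<lambda>p::real \<times> (complex^'c^'r). snd p + (cos (fst p) - 1) *\<^sub>R prj w (snd p) + sin (fst p) *\<^sub>R gen v \<sigma> (snd p))"
    by (intro continuous_intros continuous_on_compose2[OF cont_linear[OF linear_prj]] continuous_on_compose2[OF cont_linear[OF linear_gen]]) auto
  then show ?thesis by (simp add: Tf_def)
qed

lemma Tf_deriv:
  assumes gp: "\<And>i. v i * complex_of_real (w (\<sigma> i)) = v i"
    and gg: "\<And>i. v i * v (\<sigma> i) = - complex_of_real (w i)"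
    and inv: "\<And>i. \<sigma> (\<sigma> i) = i"
  shows "((\<lambda>s. Tf v \<sigma> w s M) has_vector_derivative gen v \<sigma> (Tf v \<sigma> w s M)) (at s)"
proof -
  have "((\<lambda>s. Tf v \<sigma> w s M) has_vector_derivative ((- sin s) *\<^sub>R prj w M + cos s *\<^sub>R gen v \<sigma> M)) (at s)"
    unfolding Tf_def
    by (auto intro!: derivative_eq_intros)
  moreover have "(- sin s) *\<^sub>R prj w M + cos s *\<^sub>R gen v \<sigma> M = gen v \<sigma> (Tf v \<sigma> w s M)"
  proof -
    have "gen v \<sigma> (Tf v \<sigma> w s M) $ i $ j = ((- sin s) *\<^sub>R prj w M + cos s *\<^sub>R gen v \<sigma> M) $ i $ j" for i j
    proof -
      have "gen v \<sigma> (Tf v \<sigma> w s M) $ i $ j = v i * M $ \<sigma> i $ j + complex_of_real (cos s - 1) * (v i * complex_of_real (w (\<sigma> i))) * M $ \<sigma> i $ j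
          + complex_of_real (sin s) * (v i * v (\<sigma> i)) * M$(\<sigma> (\<sigma> i))$j"
        by (simp add: Tf_nth algebra_simps)
      also have "\<dots> = v i * M $ \<sigma> i $ j + complex_of_real (cos s - 1) * v i * M $ \<sigma> i $ j
          - complex_of_real (sin s) * complex_of_real (w i) * M$i$j"
        by (simp add: gp gg inv)
      also have "\<dots> = ((- sin s) *\<^sub>R prj w M + cos s *\<^sub>R gen v \<sigma> M) $ i $ j"
        by (simp add: scaleR_conv_of_real[where 'a=complex] algebra_simps)
      finally show ?thesis .
    qed
    then show ?thesis by (simp add: vec_eq_iff)
  qed
  ultimately show ?thesis by simp
qed


lemma sum_two:
  fixes f :: "'r::finite \<Rightarrow> 'b::comm_monoid_add"
  assumes "p \<noteq> q"
  shows "(\<Sum>k\<in>UNIV. f k) = f p + f q + (\<Sum>k\<in>UNIV - {p, q}. f k)"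
proof -
  have "(\<Sum>k\<in>UNIV. f k) = f p + (\<Sum>k\<in>UNIV - {p}. f k)"
    by (simp add: sum.remove[of UNIV p])
  also have "(\<Sum>k\<in>UNIV - {p}. f k) = f q + (\<Sum>k\<in>UNIV - {p} - {q}. f k)"
    using assms by (intro sum.remove) auto
  finally show ?thesis by (simp add: add.assoc Diff_insert2[symmetric] insert_commute)
qed

lemma gram2:
  fixes X Y :: "'r::finite \<Rightarrow> complex"
  assumes pq: "p \<noteq> q"
    and u1: "cnj \<alpha> * \<alpha> + cnj \<gamma> * \<gamma> = 1" and u2: "cnj \<beta> * \<beta> + cnj \<delta> * \<delta> = 1"
    and u3: "cnj \<alpha> * \<beta> + cnj \<gamma> * \<delta> = 0"
  shows "(\<Sum>k\<in>UNIV. cnj (if k = p then \<alpha> * X p + \<beta> * X q else if k = q then \<gamma> * X p + \<delta> * X q else X k)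
            * (if k = p then \<alpha> * Y p + \<beta> * Y q else if k = q then \<gamma> * Y p + \<delta> * Y q else Y k))
         = (\<Sum>k\<in>UNIV. cnj (X k) * Y k)"
proof -
  have u4: "cnj \<beta> * \<alpha> + cnj \<delta> * \<gamma> = 0"
    using arg_cong[OF u3, of cnj] by (simp add: mult.commute)
  have e: "cnj (\<alpha> * X p + \<beta> * X q) * (\<alpha> * Y p + \<beta> * Y q) + cnj (\<gamma> * X p + \<delta> * X q) * (\<gamma> * Y p + \<delta> * Y q)
     = cnj (X p) * Y p * (cnj \<alpha> * \<alpha> + cnj \<gamma> * \<gamma>) + cnj (X q) * Y q * (cnj \<beta> * \<beta> + cnj \<delta> * \<delta>)
       + cnj (X p) * Y q * (cnj \<alpha> * \<beta> + cnj \<gamma> * \<delta>) + cnj (X q) * Y p * (cnj \<beta> * \<alpha> + cnj \<delta> * \<gamma>)"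
    by (simp add: algebra_simps)
  have two: "cnj (\<alpha> * X p + \<beta> * X q) * (\<alpha> * Y p + \<beta> * Y q) + cnj (\<gamma> * X p + \<delta> * X q) * (\<gamma> * Y p + \<delta> * Y q)
     = cnj (X p) * Y p + cnj (X q) * Y q"
    unfolding e u1 u2 u3 u4 by simp
  have rest: "(\<Sum>k\<in>UNIV - {p, q}. cnj (if k = p then \<alpha> * X p + \<beta> * X q else if k = q then \<gamma> * X p + \<delta> * X q else X k)
            * (if k = p then \<alpha> * Y p + \<beta> * Y q else if k = q then \<gamma> * Y p + \<delta> * Y q else Y k))
         = (\<Sum>k\<in>UNIV - {p, q}. cnj (X k) * Y k)"
    by (rule sum.cong) auto
  show ?thesis
    using pq
    apply (subst (1 2) sum_two[OF pq])
    apply (simp only: rest)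
    apply (simp del: complex_cnj_add complex_cnj_mult add: two)
    done
qed

lemma gram1:
  fixes X Y :: "'r::finite \<Rightarrow> complex"
  assumes u: "cnj \<alpha> * \<alpha> = 1"
  shows "(\<Sum>k\<in>UNIV. cnj (if k = p then \<alpha> * X p else X k) * (if k = p then \<alpha> * Y p else Y k))
         = (\<Sum>k\<in>UNIV. cnj (X k) * Y k)"
proof -
  have "cnj (\<alpha> * X p) * (\<alpha> * Y p) = cnj (X p) * Y p"
    using u by (simp add: algebra_simps)
  then show ?thesis
    by (subst (1 2) sum.remove[of UNIV p]) auto
qed

lemma adj_mult_nth: "(adj V ** W) $ a $ b = (\<Sum>k\<in>UNIV. cnj (V$k$a) * W$k$b)"
  by (simp add: adj_def matrix_matrix_mult_def)

lemma inner_gram: "V \<bullet> W = Re (\<Sum>j\<in>UNIV. (adj V ** W) $ j $ j)"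
proof -
  have "V \<bullet> W = (\<Sum>i\<in>UNIV. \<Sum>j\<in>UNIV. Re (cnj (V$i$j) * W$i$j))"
    by (simp add: inner_vec_def inner_complex_def)
  also have "\<dots> = (\<Sum>j\<in>UNIV. \<Sum>i\<in>UNIV. Re (cnj (V$i$j) * W$i$j))"
    by (rule sum.swap)
  also have "\<dots> = Re (\<Sum>j\<in>UNIV. (adj V ** W) $ j $ j)"
    by (simp add: adj_mult_nth Re_sum)
  finally show ?thesis .
qed

definition unitary_map :: "(complex^'c^'r \<Rightarrow> complex^'c^'r) \<Rightarrow> bool" where
  "unitary_map f \<longleftrightarrow> linear f \<and> (\<forall>V W. adj (f V) ** f W = adj V ** W)"

lemma unitary_orth: "unitary_map f \<Longrightarrow> orthogonal_transformation f"
  unfolding unitary_map_def orthogonal_transformation_def by (simp add: inner_gram)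

lemma unitary_pot: "unitary_map f \<Longrightarrow> pot a (f M) = pot a M"
proof -
  assume "unitary_map f"
  then have "adj (f M) ** f M = adj M ** M" unfolding unitary_map_def by blast
  then show ?thesis unfolding pot_def pot_term_def by metis
qed

lemma unitary_distr:
  fixes f :: "complex^'c::finite^'r::finite \<Rightarrow> complex^'c^'r"
  assumes "unitary_map f"
  shows "distr lborel borel f = lborel"
proof -
  have "DIM(complex^'c^'r) = CARD(('r \<times> 'c) bit0)" by simp
  from orth_lborel[OF this unitary_orth[OF assms]] show ?thesis .
qed

lemma unitary_rowmix2:
  fixes f :: "complex^'c::finite^'r::finite \<Rightarrow> complex^'c^'r"
  assumes pq: "p \<noteq> q" and lin: "linear f"
    and fn: "\<And>N k j. f N $ k $ j = (if k = p then \<alpha> * N$p$j + \<beta> * N$q$j else if k = q then \<gamma> * N$p$j + \<delta> * N$q$j else N$k$j)"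
    and u1: "cnj \<alpha> * \<alpha> + cnj \<gamma> * \<gamma> = 1" and u2: "cnj \<beta> * \<beta> + cnj \<delta> * \<delta> = 1"
    and u3: "cnj \<alpha> * \<beta> + cnj \<gamma> * \<delta> = 0"
  shows "unitary_map f"
  unfolding unitary_map_def
proof (intro conjI allI lin)
  fix V W :: "complex^'c^'r"
  show "adj (f V) ** f W = adj V ** W"
    unfolding vec_eq_iff adj_mult_nth fn
    using gram2[OF pq u1 u2 u3, of "\<lambda>k. V$k$_" "\<lambda>k. W$k$_"] by simp
qed

lemma unitary_rowmix1:
  fixes f :: "complex^'c::finite^'r::finite \<Rightarrow> complex^'c^'r"
  assumes lin: "linear f"
    and fn: "\<And>N k j. f N $ k $ j = (if k = p then \<alpha> * N$p$j else N$k$j)"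
    and u: "cnj \<alpha> * \<alpha> = 1"
  shows "unitary_map f"
  unfolding unitary_map_def
proof (intro conjI allI lin)
  fix V W :: "complex^'c^'r"
  show "adj (f V) ** f W = adj V ** W"
    unfolding vec_eq_iff adj_mult_nth fn
    using gram1[OF u, of p "\<lambda>k. V$k$_" "\<lambda>k. W$k$_"] by simp
qed


lemma mupd_nth: "mupd K i j z $ a $ b = (if a = i \<and> b = j then z else K$a$b)"
  by (simp add: mupd_def)

lemma mupd_self[simp]: "mupd K i j (K$i$j) = K"
  by (simp add: vec_eq_iff mupd_nth)

lemma sum_delta2:
  fixes f :: "'r::finite \<Rightarrow> 'c::finite \<Rightarrow> complex"
  shows "(\<Sum>a\<in>UNIV. \<Sum>b\<in>UNIV. if a = i \<and> b = j then f a b else 0) = f i j"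
proof -
  have "(\<Sum>a\<in>UNIV. \<Sum>b\<in>UNIV. if a = i \<and> b = j then f a b else 0) = (\<Sum>a\<in>UNIV. if a = i then (\<Sum>b\<in>UNIV. if b = j then f a b else 0) else 0)"
    by (intro sum.cong refl) auto
  also have "\<dots> = f i j" by simp
  finally show ?thesis .
qed

lemma mdot_mupd_left:
  "mdot (mupd K i j z) M = mdot (mupd K i j 0) M + z * M$i$j"
proof -
  have "mdot (mupd K i j z) M = (\<Sum>a\<in>UNIV. \<Sum>b\<in>UNIV. mupd K i j 0 $ a $ b * M$a$b + (if a = i \<and> b = j then z * M$a$b else 0))"
    unfolding mdot_def by (intro sum.cong refl) (auto simp: mupd_nth)
  also have "\<dots> = mdot (mupd K i j 0) M + z * M$i$j"
    by (simp add: sum.distrib mdot_def sum_delta2[where f="\<lambda>a b. z * M$a$b"])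
  finally show ?thesis .
qed

lemma mdot_mupd_right:
  "mdot A (mupd L i j z) = mdot A (mupd L i j 0) + z * A$i$j"
proof -
  have "mdot A (mupd L i j z) = (\<Sum>a\<in>UNIV. \<Sum>b\<in>UNIV. A$a$b * mupd L i j 0 $ a $ b + (if a = i \<and> b = j then z * A$a$b else 0))"
    unfolding mdot_def by (intro sum.cong refl) (auto simp: mupd_nth)
  also have "\<dots> = mdot A (mupd L i j 0) + z * A$i$j"
    by (simp add: sum.distrib mdot_def sum_delta2[where f="\<lambda>a b. z * A$a$b"])
  finally show ?thesis .
qed

lemma integrand_splitK:
  "integrand lr lc m R a L (mupd K i j z) M = integrand lr lc m R a L (mupd K i j 0) M * exp (z * M$i$j)"
  unfolding integrand_def by (simp add: mdot_mupd_left[of K i j z] exp_add[symmetric] algebra_simps)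

lemma mconj_nth[simp]: "mconj M $ i $ j = cnj (M$i$j)"
  by (simp add: mconj_def)

lemma integrand_splitL:
  "integrand lr lc m R a (mupd L i j z) K M = integrand lr lc m R a (mupd L i j 0) K M * exp (z * cnj (M$i$j))"
  unfolding integrand_def
  by (simp add: mdot_mupd_right[of "mconj M" L i j z] exp_add[symmetric] algebra_simps)

lemma dK_Z:
  fixes lr :: "'r::finite \<Rightarrow> real" and lc :: "'c::finite \<Rightarrow> real"
  assumes i5: "\<forall>L K. integrable lborel (integrand lr lc m R a L K)"
    and i6: "\<forall>L K i j. integrable lborel (\<lambda>M. M$i$j * integrand lr lc m R a L K M)"
  shows "dK (Zfun lr lc m R a) i j L K = (\<integral>M. M$i$j * integrand lr lc m R a L K M \<partial>lborel)"
proof -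
  define g where "g M = integrand lr lc m R a L (mupd K i j 0) M" for M
  have eqf: "Zfun lr lc m R a L (mupd K i j z) = (\<integral>M. g M * exp (z * M$i$j) \<partial>lborel)" for z
    unfolding Zfun_def g_def by (rule Bochner_Integration.integral_cong) (simp_all add: integrand_splitK[of lr lc m R a L K i j z])
  have d: "((\<lambda>z. \<integral>M. g M * exp (z * M$i$j) \<partial>lborel) has_field_derivative
          (\<integral>M. M$i$j * (g M * exp (K$i$j * M$i$j)) \<partial>lborel)) (at (K$i$j))"
  proof (rule deriv_integral)
    show "integrable lborel (\<lambda>M. g M * exp (c * M$i$j))" for c
      using i5 by (simp add: g_def integrand_splitK[symmetric])
    show "integrable lborel (\<lambda>M. M$i$j * (g M * exp (c * M$i$j)))" for c
      using i6 by (simp add: g_def integrand_splitK[symmetric])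
  qed
  have "dK (Zfun lr lc m R a) i j L K = (\<integral>M. M$i$j * (g M * exp (K$i$j * M$i$j)) \<partial>lborel)"
    unfolding dK_def eqf by (rule DERIV_imp_deriv[OF d])
  also have "\<dots> = (\<integral>M. M$i$j * integrand lr lc m R a L K M \<partial>lborel)"
    by (simp add: g_def integrand_splitK[symmetric])
  finally show ?thesis .
qed

lemma dL_Z:
  fixes lr :: "'r::finite \<Rightarrow> real" and lc :: "'c::finite \<Rightarrow> real"
  assumes i5: "\<forall>L K. integrable lborel (integrand lr lc m R a L K)"
    and i7: "\<forall>L K i j. integrable lborel (\<lambda>M. cnj (M$i$j) * integrand lr lc m R a L K M)"
  shows "dL (Zfun lr lc m R a) i j L K = (\<integral>M. cnj (M$i$j) * integrand lr lc m R a L K M \<partial>lborel)"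
proof -
  define g where "g M = integrand lr lc m R a (mupd L i j 0) K M" for M
  have eqf: "Zfun lr lc m R a (mupd L i j z) K = (\<integral>M. g M * exp (z * cnj (M$i$j)) \<partial>lborel)" for z
    unfolding Zfun_def g_def by (rule Bochner_Integration.integral_cong) (simp_all add: integrand_splitL[of lr lc m R a L i j z])
  have d: "((\<lambda>z. \<integral>M. g M * exp (z * cnj (M$i$j)) \<partial>lborel) has_field_derivative
          (\<integral>M. cnj (M$i$j) * (g M * exp (L$i$j * cnj (M$i$j))) \<partial>lborel)) (at (L$i$j))"
  proof (rule deriv_integral)
    show "integrable lborel (\<lambda>M. g M * exp (c * cnj (M$i$j)))" for c
      using i5 by (simp add: g_def integrand_splitL[symmetric])
    show "integrable lborel (\<lambda>M. cnj (M$i$j) * (g M * exp (c * cnj (M$i$j))))" for c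
      using i7 by (simp add: g_def integrand_splitL[symmetric])
  qed
  have "dL (Zfun lr lc m R a) i j L K = (\<integral>M. cnj (M$i$j) * (g M * exp (L$i$j * cnj (M$i$j))) \<partial>lborel)"
    unfolding dL_def eqf by (rule DERIV_imp_deriv[OF d])
  also have "\<dots> = (\<integral>M. cnj (M$i$j) * integrand lr lc m R a L K M \<partial>lborel)"
    by (simp add: g_def integrand_splitL[symmetric])
  finally show ?thesis .
qed

lemma dLdK_Z:
  fixes lr :: "'r::finite \<Rightarrow> real" and lc :: "'c::finite \<Rightarrow> real"
  assumes i5: "\<forall>L K. integrable lborel (integrand lr lc m R a L K)"
    and i6: "\<forall>L K i j. integrable lborel (\<lambda>M. M$i$j * integrand lr lc m R a L K M)"
    and i8: "\<forall>L K i j i' j'. integrable lborel (\<lambda>M. cnj (M$i$j) * M$i'$j' * integrand lr lc m R a L K M)"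
  shows "dL (dK (Zfun lr lc m R a) i' j') i j L K = (\<integral>M. cnj (M$i$j) * M$i'$j' * integrand lr lc m R a L K M \<partial>lborel)"
proof -
  define g where "g M = M$i'$j' * integrand lr lc m R a (mupd L i j 0) K M" for M
  have eqf: "dK (Zfun lr lc m R a) i' j' (mupd L i j z) K = (\<integral>M. g M * exp (z * cnj (M$i$j)) \<partial>lborel)" for z
    unfolding dK_Z[OF i5 i6] g_def by (simp add: integrand_splitL[of lr lc m R a L i j z] mult.assoc)
  have d: "((\<lambda>z. \<integral>M. g M * exp (z * cnj (M$i$j)) \<partial>lborel) has_field_derivative
          (\<integral>M. cnj (M$i$j) * (g M * exp (L$i$j * cnj (M$i$j))) \<partial>lborel)) (at (L$i$j))"
  proof (rule deriv_integral)
    show "integrable lborel (\<lambda>M. g M * exp (c * cnj (M$i$j)))" for c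
      using i6 by (simp add: g_def mult.assoc integrand_splitL[symmetric])
    show "integrable lborel (\<lambda>M. cnj (M$i$j) * (g M * exp (c * cnj (M$i$j))))" for c
      using i8 by (simp add: g_def mult.assoc integrand_splitL[symmetric])
  qed
  have "dL (dK (Zfun lr lc m R a) i' j') i j L K = (\<integral>M. cnj (M$i$j) * (g M * exp (L$i$j * cnj (M$i$j))) \<partial>lborel)"
    unfolding dL_def eqf by (rule DERIV_imp_deriv[OF d])
  also have "\<dots> = (\<integral>M. cnj (M$i$j) * M$i'$j' * integrand lr lc m R a L K M \<partial>lborel)"
    by (simp add: g_def mult.assoc integrand_splitL[symmetric])
  finally show ?thesis .
qed


lemma integrand_eq:
  "integrand lr lc m R a L K N = exp (S0 (Ek lr lc m R) L K N - pot a N)"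
  unfolding integrand_def Hfun_def S0_def kin_def pot_def by (simp add: algebra_simps)

lemma ward_family:
  fixes v :: "'r::finite \<Rightarrow> complex" and lr :: "'r \<Rightarrow> real" and lc :: "'c::finite \<Rightarrow> real"
  assumes gp: "\<And>i. v i * complex_of_real (w (\<sigma> i)) = v i"
    and gg: "\<And>i. v i * v (\<sigma> i) = - complex_of_real (w i)"
    and inv: "\<And>i. \<sigma> (\<sigma> i) = i"
    and U: "\<And>s. unitary_map (Tf v \<sigma> w s :: complex^'c^'r \<Rightarrow> complex^'c^'r)"
    and Iint: "integrable lborel (integrand lr lc m R a L K)"
    and Jint: "integrable lborel (\<lambda>N. integrand lr lc m R a L K N * DS0 (Ek lr lc m R) L K N (gen v \<sigma> N))"
  shows "(\<integral>N. integrand lr lc m R a L K N * DS0 (Ek lr lc m R) L K N (gen v \<sigma> N) \<partial>lborel) = 0"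
proof -
  define E where "E = Ek lr lc m R"
  define I where "I = integrand lr lc m R a L K"
  define J where "J N = I N * DS0 E L K N (gen v \<sigma> N)" for N
  have der: "((\<lambda>s. I (Tf v \<sigma> w s M)) has_vector_derivative J (Tf v \<sigma> w s M)) (at s)" for M s
  proof -
    have eq: "(\<lambda>s. I (Tf v \<sigma> w s M)) = exp \<circ> (\<lambda>s. S0 E L K (Tf v \<sigma> w s M) - pot a M)"
      by (simp add: fun_eq_iff I_def E_def integrand_eq unitary_pot[OF U])
    have d1: "((\<lambda>s. S0 E L K (Tf v \<sigma> w s M)) has_vector_derivative DS0 E L K (Tf v \<sigma> w s M) (gen v \<sigma> (Tf v \<sigma> w s M))) (at s)"
      using vector_derivative_diff_chain_within[OF Tf_deriv[where v=v and \<sigma>=\<sigma> and w=w and M=M and s=s, OF gp gg inv]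
        has_derivative_subset[OF S0_deriv subset_UNIV]]
      by (simp add: o_def)
    have d2: "((\<lambda>s. S0 E L K (Tf v \<sigma> w s M) - pot a M) has_vector_derivative DS0 E L K (Tf v \<sigma> w s M) (gen v \<sigma> (Tf v \<sigma> w s M))) (at s)"
      using has_vector_derivative_diff[OF d1 has_vector_derivative_const] by simp
    note d3 = field_vector_diff_chain_at[OF d2 DERIV_exp]
    show ?thesis unfolding eq
      using d3 by (simp add: J_def I_def E_def integrand_eq unitary_pot[OF U] mult.commute)
  qed
  have "integral\<^sup>L lborel J = 0"
  proof (rule ward_core[where T="Tf v \<sigma> w" and Ig=I])
    show "distr lborel borel (Tf v \<sigma> w s :: complex^'c^'r \<Rightarrow> complex^'c^'r) = lborel" for s by (rule unitary_distr[OF U])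
    show "continuous_on UNIV (\<lambda>p. Tf v \<sigma> w (fst p) (snd p) :: complex^'c^'r)" by (rule Tf_cont)
    show "integrable lborel I" using Iint by (simp add: I_def)
    show "integrable lborel J" using Jint by (simp add: J_def[abs_def] I_def E_def)
    show "((\<lambda>s. I (Tf v \<sigma> w s M)) has_vector_derivative J (Tf v \<sigma> w s M)) (at s)" for M s by (rule der)
    show "Tf v \<sigma> w 0 M = M" for M :: "complex^'c^'r" by (rule Tf0)
    show "continuous_on UNIV (\<lambda>s. J (Tf v \<sigma> w s M))" for M
    proof -
      have c1: "continuous_on UNIV (\<lambda>s. I (Tf v \<sigma> w s M))"
        using der[of M] by (intro continuous_at_imp_continuous_on ballI has_vector_derivative_continuous) blast
      have cT: "continuous_on UNIV (\<lambda>s. Tf v \<sigma> w s M)"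
        unfolding Tf_def by (intro continuous_intros)
      have c2: "continuous_on UNIV (\<lambda>s. DS0 E L K (Tf v \<sigma> w s M) (gen v \<sigma> (Tf v \<sigma> w s M)))"
        unfolding DS0_def dd_def gen_nth by (intro continuous_intros cT)
      show ?thesis unfolding J_def by (intro continuous_intros c1 c2)
    qed
  qed
  then show ?thesis by (simp add: J_def[abs_def] I_def E_def)
qed


lemma J_int:
  fixes lr :: "'r::finite \<Rightarrow> real" and lc :: "'c::finite \<Rightarrow> real"
  assumes i6: "\<forall>L K i j. integrable lborel (\<lambda>M. M$i$j * integrand lr lc m R a L K M)"
    and i7: "\<forall>L K i j. integrable lborel (\<lambda>M. cnj (M$i$j) * integrand lr lc m R a L K M)"
    and i8: "\<forall>L K i j i' j'. integrable lborel (\<lambda>M. cnj (M$i$j) * M$i'$j' * integrand lr lc m R a L K M)"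
  shows "integrable lborel (\<lambda>N. integrand lr lc m R a L K N * DS0 (Ek lr lc m R) L K N (gen v \<sigma> N))"
proof -
  define I where "I = integrand lr lc m R a L K"
  define E where "E = Ek lr lc m R"
  have eq: "(\<lambda>N. I N * DS0 E L K N (gen v \<sigma> N)) = (\<lambda>N. \<Sum>i\<in>UNIV. \<Sum>j\<in>UNIV.
      (- (cnj (v i) * complex_of_real (E i j))) * (cnj (N$\<sigma> i$j) * N$i$j * I N)
      - (complex_of_real (E i j) * v i) * (cnj (N$i$j) * N$\<sigma> i$j * I N)
      + (K$i$j * v i) * (N$\<sigma> i$j * I N) + (cnj (v i) * L$i$j) * (cnj (N$\<sigma> i$j) * I N))"
  proof (rule ext)
    fix N
    show "I N * DS0 E L K N (gen v \<sigma> N) = (\<Sum>i\<in>UNIV. \<Sum>j\<in>UNIV.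
      (- (cnj (v i) * complex_of_real (E i j))) * (cnj (N$\<sigma> i$j) * N$i$j * I N)
      - (complex_of_real (E i j) * v i) * (cnj (N$i$j) * N$\<sigma> i$j * I N)
      + (K$i$j * v i) * (N$\<sigma> i$j * I N) + (cnj (v i) * L$i$j) * (cnj (N$\<sigma> i$j) * I N))"
      unfolding DS0_def sum_distrib_left
      by (intro sum.cong refl) (simp add: dd_def algebra_simps)
  qed
  have "integrable lborel (\<lambda>N. \<Sum>i\<in>UNIV. \<Sum>j\<in>UNIV.
      (- (cnj (v i) * complex_of_real (E i j))) * (cnj (N$\<sigma> i$j) * N$i$j * I N)
      - (complex_of_real (E i j) * v i) * (cnj (N$i$j) * N$\<sigma> i$j * I N)
      + (K$i$j * v i) * (N$\<sigma> i$j * I N) + (cnj (v i) * L$i$j) * (cnj (N$\<sigma> i$j) * I N))"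
    unfolding I_def
    apply (rule Bochner_Integration.integrable_sum, rule Bochner_Integration.integrable_sum)
    apply (intro Bochner_Integration.integrable_add Bochner_Integration.integrable_diff integrable_mult_right)
    apply (rule i8[rule_format] | rule i6[rule_format] | rule i7[rule_format])+
    done
  then show ?thesis using eq by (simp add: I_def E_def)
qed

lemma DS0_two:
  assumes pq: "p \<noteq> q" and z: "\<And>i. i \<noteq> p \<Longrightarrow> i \<noteq> q \<Longrightarrow> v i = 0"
  shows "DS0 E L K N (gen v \<sigma> N) = (\<Sum>j\<in>UNIV. dd E L K N (gen v \<sigma> N) p j + dd E L K N (gen v \<sigma> N) q j)"
proof -
  have "(\<Sum>i\<in>UNIV - {p, q}. \<Sum>j\<in>UNIV. dd E L K N (gen v \<sigma> N) i j) = 0"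
    by (intro sum.neutral ballI) (auto simp: dd_def z)
  then show ?thesis unfolding DS0_def by (simp add: sum_two[OF pq] sum.distrib)
qed

lemma DS0_one:
  assumes z: "\<And>i. i \<noteq> p \<Longrightarrow> v i = 0"
  shows "DS0 E L K N (gen v \<sigma> N) = (\<Sum>j\<in>UNIV. dd E L K N (gen v \<sigma> N) p j)"
proof -
  have "(\<Sum>i\<in>UNIV - {p}. \<Sum>j\<in>UNIV. dd E L K N (gen v \<sigma> N) i j) = 0"
    by (intro sum.neutral ballI) (auto simp: dd_def z)
  then show ?thesis unfolding DS0_def by (simp add: sum.remove[of UNIV p])
qed

lemma cs1: "complex_of_real (cos s) * complex_of_real (cos s) + complex_of_real (sin s) * complex_of_real (sin s) = 1"
proof -
  have h: "cos s * cos s + sin s * sin s = 1" by (rule sin_cos_squared_add3)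
  show ?thesis by (metis h of_real_add of_real_mult of_real_1)
qed


definition vR :: "'r \<Rightarrow> 'r \<Rightarrow> 'r \<Rightarrow> complex" where "vR p q i = (if i = p then -1 else if i = q then 1 else 0)"
definition vC :: "'r \<Rightarrow> 'r \<Rightarrow> 'r \<Rightarrow> complex" where "vC p q i = (if i = p \<or> i = q then \<i> else 0)"
definition sw :: "'r \<Rightarrow> 'r \<Rightarrow> 'r \<Rightarrow> 'r" where "sw p q i = (if i = p then q else if i = q then p else i)"
definition w2 :: "'r \<Rightarrow> 'r \<Rightarrow> 'r \<Rightarrow> real" where "w2 p q i = (if i = p \<or> i = q then 1 else 0)"
definition vP :: "'r \<Rightarrow> 'r \<Rightarrow> complex" where "vP p i = (if i = p then \<i> else 0)"
definition w1 :: "'r \<Rightarrow> 'r \<Rightarrow> real" where "w1 p i = (if i = p then 1 else 0)"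

lemma key2:
  assumes pq: "p \<noteq> q"
  shows "(dd E L K N (gen (vR p q) (sw p q) N) p j + dd E L K N (gen (vR p q) (sw p q) N) q j
      - \<i> * (dd E L K N (gen (vC p q) (sw p q) N) p j + dd E L K N (gen (vC p q) (sw p q) N) q j)) / 2
    = complex_of_real (E p j - E q j) * (cnj (N$q$j) * N$p$j) + K$q$j * N$p$j - L$p$j * cnj (N$q$j)"
  using pq by (simp add: dd_def vR_def vC_def sw_def field_simps)

lemma key1:
  "- \<i> * dd E L K N (gen (vP p) (\<lambda>i. i) N) p j = K$p$j * N$p$j - L$p$j * cnj (N$p$j)"
  by (simp add: dd_def vP_def algebra_simps)


lemma unitary_R:
  assumes pq: "p \<noteq> q"
  shows "unitary_map (Tf (vR p q) (sw p q) (w2 p q) s :: complex^'c::finite^'r::finite \<Rightarrow> _)"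
proof (rule unitary_rowmix2[OF pq linear_Tf])
  define c t where "c = complex_of_real (cos s)" and "t = complex_of_real (sin s)"
  have cs: "c * c + t * t = 1" unfolding c_def t_def by (rule cs1)
  show "Tf (vR p q) (sw p q) (w2 p q) s N $ k $ j = (if k = p then c * N$p$j + (- t) * N$q$j else if k = q then t * N$p$j + c * N$q$j else N$k$j)"
    for N :: "complex^'c^'r" and k j
    using pq by (simp add: Tf_nth vR_def sw_def w2_def c_def t_def algebra_simps)
  show "cnj c * c + cnj t * t = 1" using cs by (simp add: c_def t_def)
  show "cnj (- t) * (- t) + cnj c * c = 1" using cs by (simp add: c_def t_def algebra_simps)
  show "cnj c * (- t) + cnj t * c = 0" by (simp add: c_def t_def algebra_simps)
qed

lemma unitary_C:
  assumes pq: "p \<noteq> q"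
  shows "unitary_map (Tf (vC p q) (sw p q) (w2 p q) s :: complex^'c::finite^'r::finite \<Rightarrow> _)"
proof (rule unitary_rowmix2[OF pq linear_Tf])
  define c t where "c = complex_of_real (cos s)" and "t = complex_of_real (sin s)"
  have cs: "c * c + t * t = 1" unfolding c_def t_def by (rule cs1)
  show "Tf (vC p q) (sw p q) (w2 p q) s N $ k $ j = (if k = p then c * N$p$j + (\<i> * t) * N$q$j else if k = q then (\<i> * t) * N$p$j + c * N$q$j else N$k$j)"
    for N :: "complex^'c^'r" and k j
    using pq by (simp add: Tf_nth vC_def sw_def w2_def c_def t_def algebra_simps)
  have ct: "cnj c = c" "cnj t = t" by (simp_all add: c_def t_def)
  show "cnj c * c + cnj (\<i> * t) * (\<i> * t) = 1" using cs by (simp add: ct algebra_simps)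
  show "cnj (\<i> * t) * (\<i> * t) + cnj c * c = 1" using cs by (simp add: ct algebra_simps)
  show "cnj c * (\<i> * t) + cnj (\<i> * t) * c = 0" by (simp add: ct algebra_simps)
qed

lemma unitary_P:
  shows "unitary_map (Tf (vP p) (\<lambda>i. i) (w1 p) s :: complex^'c::finite^'r::finite \<Rightarrow> _)"
proof (rule unitary_rowmix1[OF linear_Tf])
  define c t where "c = complex_of_real (cos s)" and "t = complex_of_real (sin s)"
  have cs: "c * c + t * t = 1" unfolding c_def t_def by (rule cs1)
  show "Tf (vP p) (\<lambda>i. i) (w1 p) s N $ k $ j = (if k = p then (c + \<i> * t) * N$p$j else N$k$j)"
    for N :: "complex^'c^'r" and k j
    by (simp add: Tf_nth vP_def w1_def c_def t_def algebra_simps)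
  have ct: "cnj c = c" "cnj t = t" by (simp_all add: c_def t_def)
  show "cnj (c + \<i> * t) * (c + \<i> * t) = 1" using cs by (simp add: ct algebra_simps)
qed


theorem mainTheorem1:
  fixes lr :: "'r::finite \<Rightarrow> real" and lc :: "'c::finite \<Rightarrow> real"
    and m :: real and R :: "real \<Rightarrow> real \<Rightarrow> real" and a :: "nat \<Rightarrow> real"
  assumes "CARD('r) = CARD('c)"
    and "inj lr" and "inj lc"
    and "\<forall>M::complex^'c^'r. summable (pot_term a M)"
    and "\<forall>L K. integrable lborel (integrand lr lc m R a L K)"
    and "\<forall>L K i j. integrable lborel (\<lambda>M. M$i$j * integrand lr lc m R a L K M)"
    and "\<forall>L K i j. integrable lborel (\<lambda>M. cnj (M$i$j) * integrand lr lc m R a L K M)"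
    and "\<forall>L K i j i' j'. integrable lborel
           (\<lambda>M. cnj (M$i$j) * M$i'$j' * integrand lr lc m R a L K M)"
  shows "\<forall>p1 p1' L K.
    (\<Sum>p2\<in>UNIV.
        complex_of_real (Ek lr lc m R p1' p2 - Ek lr lc m R p1 p2)
          * dL (dK (Zfun lr lc m R a) p1' p2) p1 p2 L K
      + K$p1$p2 * dK (Zfun lr lc m R a) p1' p2 L K
      - L$p1'$p2 * dL (Zfun lr lc m R a) p1 p2 L K) = 0"
proof (intro allI)
  note i5 = assms(5) and i6 = assms(6) and i7 = assms(7) and i8 = assms(8)
  fix p1 p1' :: 'r and L K :: "complex^'c^'r"
  define I where "I = integrand lr lc m R a L K"
  define E where "E = Ek lr lc m R"
  define tg where "tg N = (\<Sum>p2\<in>UNIV. complex_of_real (E p1' p2 - E p1 p2) * (cnj (N$p1$p2) * N$p1'$p2)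
       + K$p1$p2 * N$p1'$p2 - L$p1'$p2 * cnj (N$p1$p2))" for N :: "complex^'c^'r"
  have Iint: "integrable lborel I" using i5 by (simp add: I_def)
  have JI: "integrable lborel (\<lambda>N. I N * DS0 E L K N (gen v \<sigma> N))" for v \<sigma>
    using J_int[OF i6 i7 i8] by (simp add: I_def E_def)
  have F_int: "integrable lborel (\<lambda>M. complex_of_real (E p1' p2 - E p1 p2) * (cnj (M$p1$p2) * M$p1'$p2 * I M)
        + K$p1$p2 * (M$p1'$p2 * I M) - L$p1'$p2 * (cnj (M$p1$p2) * I M))" for p2
    unfolding I_def
    by (intro Bochner_Integration.integrable_add Bochner_Integration.integrable_diff integrable_mult_right
        i6[rule_format] i7[rule_format] i8[rule_format])
  have LHS: "(\<Sum>p2\<in>UNIV.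
        complex_of_real (Ek lr lc m R p1' p2 - Ek lr lc m R p1 p2)
          * dL (dK (Zfun lr lc m R a) p1' p2) p1 p2 L K
      + K$p1$p2 * dK (Zfun lr lc m R a) p1' p2 L K
      - L$p1'$p2 * dL (Zfun lr lc m R a) p1 p2 L K) = (\<integral>N. I N * tg N \<partial>lborel)"
  proof -
    have "(\<Sum>p2\<in>UNIV.
        complex_of_real (Ek lr lc m R p1' p2 - Ek lr lc m R p1 p2)
          * dL (dK (Zfun lr lc m R a) p1' p2) p1 p2 L K
      + K$p1$p2 * dK (Zfun lr lc m R a) p1' p2 L K
      - L$p1'$p2 * dL (Zfun lr lc m R a) p1 p2 L K)
      = (\<Sum>p2\<in>UNIV. complex_of_real (E p1' p2 - E p1 p2) * (\<integral>M. cnj (M$p1$p2) * M$p1'$p2 * I M \<partial>lborel)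
        + K$p1$p2 * (\<integral>M. M$p1'$p2 * I M \<partial>lborel) - L$p1'$p2 * (\<integral>M. cnj (M$p1$p2) * I M \<partial>lborel))"
      by (simp add: dLdK_Z[OF i5 i6 i8] dK_Z[OF i5 i6] dL_Z[OF i5 i7] I_def E_def)
    also have "\<dots> = (\<Sum>p2\<in>UNIV. \<integral>M. complex_of_real (E p1' p2 - E p1 p2) * (cnj (M$p1$p2) * M$p1'$p2 * I M)
        + K$p1$p2 * (M$p1'$p2 * I M) - L$p1'$p2 * (cnj (M$p1$p2) * I M) \<partial>lborel)"
    proof (intro sum.cong refl)
      fix p2
      have a1: "integrable lborel (\<lambda>M. cnj (M$p1$p2) * M$p1'$p2 * I M)" using i8 by (simp add: I_def)
      have a2: "integrable lborel (\<lambda>M. M$p1'$p2 * I M)" using i6 by (simp add: I_def)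
      have a3: "integrable lborel (\<lambda>M. cnj (M$p1$p2) * I M)" using i7 by (simp add: I_def)
      show "complex_of_real (E p1' p2 - E p1 p2) * (\<integral>M. cnj (M$p1$p2) * M$p1'$p2 * I M \<partial>lborel)
        + K$p1$p2 * (\<integral>M. M$p1'$p2 * I M \<partial>lborel) - L$p1'$p2 * (\<integral>M. cnj (M$p1$p2) * I M \<partial>lborel)
        = (\<integral>M. complex_of_real (E p1' p2 - E p1 p2) * (cnj (M$p1$p2) * M$p1'$p2 * I M)
        + K$p1$p2 * (M$p1'$p2 * I M) - L$p1'$p2 * (cnj (M$p1$p2) * I M) \<partial>lborel)"
        using a1 a2 a3
        by (simp add: Bochner_Integration.integral_diff Bochner_Integration.integral_add integrable_mult_right)
    qed
    also have "\<dots> = (\<integral>M. (\<Sum>p2\<in>UNIV. complex_of_real (E p1' p2 - E p1 p2) * (cnj (M$p1$p2) * M$p1'$p2 * I M)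
        + K$p1$p2 * (M$p1'$p2 * I M) - L$p1'$p2 * (cnj (M$p1$p2) * I M)) \<partial>lborel)"
      by (rule Bochner_Integration.integral_sum[symmetric]) (rule F_int)
    also have "\<dots> = (\<integral>N. I N * tg N \<partial>lborel)"
      by (intro Bochner_Integration.integral_cong refl) (simp add: tg_def sum_distrib_left algebra_simps)
    finally show ?thesis .
  qed
  have "(\<integral>N. I N * tg N \<partial>lborel) = 0"
  proof (cases "p1 = p1'")
    case True
    have gp: "\<And>i. vP p1 i * complex_of_real (w1 p1 ((\<lambda>i. i) i)) = vP p1 i" by (simp add: vP_def w1_def)
    have gg: "\<And>i. vP p1 i * vP p1 ((\<lambda>i. i) i) = - complex_of_real (w1 p1 i)" by (simp add: vP_def w1_def)
    have W: "(\<integral>N. I N * DS0 E L K N (gen (vP p1) (\<lambda>i. i) N) \<partial>lborel) = 0"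
      using ward_family[OF gp gg _ unitary_P, of lr lc m R a L K] Iint JI by (simp add: I_def E_def)
    have pt: "I N * tg N = - \<i> * (I N * DS0 E L K N (gen (vP p1) (\<lambda>i. i) N))" for N
    proof -
      have "DS0 E L K N (gen (vP p1) (\<lambda>i. i) N) = (\<Sum>j\<in>UNIV. dd E L K N (gen (vP p1) (\<lambda>i. i) N) p1 j)"
        by (rule DS0_one) (simp add: vP_def)
      then have "- \<i> * DS0 E L K N (gen (vP p1) (\<lambda>i. i) N) = (\<Sum>j\<in>UNIV. - \<i> * dd E L K N (gen (vP p1) (\<lambda>i. i) N) p1 j)"
        by (simp only: sum_distrib_left)
      also have "\<dots> = (\<Sum>j\<in>UNIV. K$p1$j * N$p1$j - L$p1$j * cnj (N$p1$j))"
        by (simp only: key1)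
      also have "\<dots> = tg N" by (simp add: tg_def True)
      finally have "- \<i> * DS0 E L K N (gen (vP p1) (\<lambda>i. i) N) = tg N" .
      then show ?thesis by (metis mult.left_commute)
    qed
    show ?thesis by (simp add: pt W)
  next
    case False
    define p q where "p = p1'" and "q = p1"
    have pq: "p \<noteq> q" using False by (simp add: p_def q_def)
    have inv: "\<And>i. sw p q (sw p q i) = i" by (simp add: sw_def)
    have gpR: "\<And>i. vR p q i * complex_of_real (w2 p q (sw p q i)) = vR p q i" using pq by (simp add: vR_def w2_def sw_def)
    have ggR: "\<And>i. vR p q i * vR p q (sw p q i) = - complex_of_real (w2 p q i)" using pq by (simp add: vR_def w2_def sw_def)
    have gpC: "\<And>i. vC p q i * complex_of_real (w2 p q (sw p q i)) = vC p q i" using pq by (simp add: vC_def w2_def sw_def)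
    have ggC: "\<And>i. vC p q i * vC p q (sw p q i) = - complex_of_real (w2 p q i)" using pq by (simp add: vC_def w2_def sw_def)
    have WR: "(\<integral>N. I N * DS0 E L K N (gen (vR p q) (sw p q) N) \<partial>lborel) = 0"
      using ward_family[OF gpR ggR inv unitary_R[OF pq], of lr lc m R a L K] Iint JI by (simp add: I_def E_def)
    have WC: "(\<integral>N. I N * DS0 E L K N (gen (vC p q) (sw p q) N) \<partial>lborel) = 0"
      using ward_family[OF gpC ggC inv unitary_C[OF pq], of lr lc m R a L K] Iint JI by (simp add: I_def E_def)
    have pt: "I N * tg N = (I N * DS0 E L K N (gen (vR p q) (sw p q) N) - \<i> * (I N * DS0 E L K N (gen (vC p q) (sw p q) N))) / 2" for N
    proof -
      have r: "DS0 E L K N (gen (vR p q) (sw p q) N) = (\<Sum>j\<in>UNIV. dd E L K N (gen (vR p q) (sw p q) N) p j + dd E L K N (gen (vR p q) (sw p q) N) q j)"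
        by (rule DS0_two[OF pq]) (simp add: vR_def)
      have c: "DS0 E L K N (gen (vC p q) (sw p q) N) = (\<Sum>j\<in>UNIV. dd E L K N (gen (vC p q) (sw p q) N) p j + dd E L K N (gen (vC p q) (sw p q) N) q j)"
        by (rule DS0_two[OF pq]) (simp add: vC_def)
      have "(DS0 E L K N (gen (vR p q) (sw p q) N) - \<i> * DS0 E L K N (gen (vC p q) (sw p q) N)) / 2
         = (\<Sum>j\<in>UNIV. (dd E L K N (gen (vR p q) (sw p q) N) p j + dd E L K N (gen (vR p q) (sw p q) N) q j
            - \<i> * (dd E L K N (gen (vC p q) (sw p q) N) p j + dd E L K N (gen (vC p q) (sw p q) N) q j)) / 2)"
        unfolding r c by (simp only: sum_divide_distrib[symmetric] sum_subtractf sum_distrib_left)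
      also have "\<dots> = tg N"
        by (simp only: key2[OF pq]) (simp add: tg_def p_def q_def)
      finally have "(DS0 E L K N (gen (vR p q) (sw p q) N) - \<i> * DS0 E L K N (gen (vC p q) (sw p q) N)) / 2 = tg N" .
      then show ?thesis by (simp add: field_simps)
    qed
    have "(\<integral>N. I N * tg N \<partial>lborel) = ((\<integral>N. I N * DS0 E L K N (gen (vR p q) (sw p q) N) \<partial>lborel)
         - \<i> * (\<integral>N. I N * DS0 E L K N (gen (vC p q) (sw p q) N) \<partial>lborel)) / 2"
      unfolding pt using JI
      by (simp add: Bochner_Integration.integral_diff integrable_mult_right integral_divide_zero)
    then show ?thesis by (simp add: WR WC)
  qed
  then show "(\<Sum>p2\<in>UNIV.
        complex_of_real (Ek lr lc m R p1' p2 - Ek lr lc m R p1 p2)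
          * dL (dK (Zfun lr lc m R a) p1' p2) p1 p2 L K
      + K$p1$p2 * dK (Zfun lr lc m R a) p1' p2 L K
      - L$p1'$p2 * dL (Zfun lr lc m R a) p1 p2 L K) = 0"
    using LHS by simp
qed


end
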